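(* For any menu $M=\{(q_i,t_i)\}$ of threshold certificates offered by the certifier, in the resulting equilibrium market outcome each producer type $\psi$ trades with consumer type $\phi(\psi)$, where $F(\phi(\psi))=G(\psi)$ (as cumulative distribution functions). The quality level at which $\psi$ and $\phi(\psi)$ trade is a menu threshold $q_i$ maximizing $f(q_i;\phi(\psi))-g(q_i;\psi)-t_i$, and this level is weakly increasing in $\psi$.
   Context: Certification market. Producers have types $\psi\in\mathbb{R}_+$ distributed by an atomless probability measure $G$ with compact support; consumers have types $\phi\in\mathbb{R}_+$ distributed by an atomless probability measure $F$ with compact support. Goods have quality $q\in[0,1]$. Production cost $g(q;\psi)$ is weakly convex and non-decreasing in $q$ with $g(0;\psi)=0$; consumer value $f(q;\phi)$ is weakly concave and non-decreasing in $q$ with $f(0;\phi)=0$, $0\le f\le1$. Strict single-crossing: for all $\phi_1<\phi_2$, $q_1<q_2$: $f(q_2;\phi_2)-f(q_1;\phi_2)>f(q_2;\phi_1)-f(q_1;\phi_1)$; for all $\psi_1<\psi_2$, $q_1<q_2$: $g(q_2;\psi_2)-g(q_1;\psi_2)<g(q_2;\psi_1)-g(q_1;\psi_1)$. Utilities are quasilinear (consumer: $f(q;\phi)-p$; producer: $p-g(q;\psi)-t$ where $t$ is the transfer to the certifier). Threshold certificates: every certificate has the form $[q,1]$, identified with $q$; a menu is $M=\{(q_i,t_i)\}$, always including $(0,0)$; a producer who selects threshold $q$ produces at quality exactly $q$ and pays $t$. Producers choose certificates simultaneously (an equilibrium is a strategy $\psi\mapsto\Gamma(\psi)\in M$ from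 which no producer can profitably deviate), then goods trade in a competitive (Walrasian) market equilibrium in which each consumer buys a utility-maximizing quality level at market prices and markets clear. *)

theory Defs
  imports "HOL-Probability.Probability"
begin

definition type_distribution :: "real measure \<Rightarrow> bool" where
  "type_distribution G \<longleftrightarrow>
     prob_space G \<and> sets G = sets borel \<and>
     (\<forall>x. emeasure G {x} = 0) \<and>
     (\<exists>K. compact K \<and> K \<subseteq> {0..} \<and> emeasure G (UNIV - K) = 0)"

definition cost_fun :: "(real \<Rightarrow> real \<Rightarrow> real) \<Rightarrow> bool" where
  "cost_fun g \<longleftrightarrow>
     (\<forall>\<psi>\<ge>0. convex_on {0..1} (\<lambda>q. g q \<psi>) \<and> mono_on {0..1} (\<lambda>q. g q \<psi>) \<and> g 0 \<psi> = 0) \<and>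
     (\<forall>\<psi>1 \<psi>2 q1 q2. 0 \<le> \<psi>1 \<longrightarrow> \<psi>1 < \<psi>2 \<longrightarrow> 0 \<le> q1 \<longrightarrow> q1 < q2 \<longrightarrow> q2 \<le> 1 \<longrightarrow>
        g q2 \<psi>2 - g q1 \<psi>2 < g q2 \<psi>1 - g q1 \<psi>1)"

definition value_fun :: "(real \<Rightarrow> real \<Rightarrow> real) \<Rightarrow> bool" where
  "value_fun f \<longleftrightarrow>
     (\<forall>\<phi>\<ge>0. concave_on {0..1} (\<lambda>q. f q \<phi>) \<and> mono_on {0..1} (\<lambda>q. f q \<phi>) \<and> f 0 \<phi> = 0 \<and>
        (\<forall>q\<in>{0..1}. 0 \<le> f q \<phi> \<and> f q \<phi> \<le> 1)) \<and>
     (\<forall>\<phi>1 \<phi>2 q1 q2. 0 \<le> \<phi>1 \<longrightarrow> \<phi>1 < \<phi>2 \<longrightarrow> 0 \<le> q1 \<longrightarrow> q1 < q2 \<longrightarrow> q2 \<le> 1 \<longrightarrow>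
        f q2 \<phi>2 - f q1 \<phi>2 > f q2 \<phi>1 - f q1 \<phi>1)"

definition menu :: "(real \<times> real) set \<Rightarrow> bool" where
  "menu M \<longleftrightarrow> finite M \<and> (0, 0) \<in> M \<and> (\<forall>(q, t)\<in>M. 0 \<le> q \<and> q \<le> 1)"

text \<open>Equilibrium of the certification game followed by the competitive market:
  \<Gamma> is the producers' certificate choice, p the market price of each quality level
  (a menu threshold), D the quality level bought by each consumer type.
  (i) no producer type can profitably deviate to another certificate of the menu
      (producers are price takers),
  (ii) each consumer type buys a utility-maximizing quality level at prices p,
  (iii) the market for each quality level clears.\<close>
definition market_equilibrium ::
  "(real \<times> real) set \<Rightarrow> real measure \<Rightarrow> real measure \<Rightarrow>
   (real \<Rightarrow> real \<Rightarrow> real) \<Rightarrow> (real \<Rightarrow> real \<Rightarrow> real) \<Rightarrow>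
   (real \<Rightarrow> real \<times> real) \<Rightarrow> (real \<Rightarrow> real) \<Rightarrow> (real \<Rightarrow> real) \<Rightarrow> bool" where
  "market_equilibrium M G F f g \<Gamma> p D \<longleftrightarrow>
     (\<forall>\<psi>\<ge>0. \<Gamma> \<psi> \<in> M \<and>
        (\<forall>(q, t)\<in>M. p q - g q \<psi> - t \<le> p (fst (\<Gamma> \<psi>)) - g (fst (\<Gamma> \<psi>)) \<psi> - snd (\<Gamma> \<psi>))) \<and>
     (\<forall>\<phi>\<ge>0. D \<phi> \<in> fst ` M \<and>
        (\<forall>q\<in>fst ` M. f q \<phi> - p q \<le> f (D \<phi>) \<phi> - p (D \<phi>))) \<and>
     (\<forall>q\<in>fst ` M.
        {\<psi>. 0 \<le> \<psi> \<and> fst (\<Gamma> \<psi>) = q} \<in> sets G \<and>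
        {\<phi>. 0 \<le> \<phi> \<and> D \<phi> = q} \<in> sets F \<and>
        measure G {\<psi>. 0 \<le> \<psi> \<and> fst (\<Gamma> \<psi>) = q} = measure F {\<phi>. 0 \<le> \<phi> \<and> D \<phi> = q})"

end

theory Submission
  imports Defs
begin


lemma level_null:
  assumes rd: "real_distribution G" and at: "\<forall>x. emeasure G {x} = 0"
  shows "{x. cdf G x = v} \<in> null_sets G"
proof -
  interpret real_distribution G by (rule rd)
  let ?L = "{x. cdf G x = v}"
  have mono: "mono (cdf G)" using cdf_nondecreasing by (auto simp: mono_def)
  have meas: "cdf G \<in> borel_measurable borel" by (rule borel_measurable_mono[OF mono])
  have Lb: "?L \<in> sets borel"
  proof -
    have "?L = cdf G -` {v} \<inter> space borel" by auto
    then show ?thesis using meas by (metis borel_closed closed_singleton measurable_sets)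
  qed
  have "emeasure G ?L = (SUP K \<in> {K. K \<subseteq> ?L \<and> compact K}. emeasure G K)"
    by (rule inner_regular) (auto simp: Lb)
  also have "\<dots> \<le> 0"
  proof (rule SUP_least)
    fix K assume K: "K \<in> {K. K \<subseteq> ?L \<and> compact K}"
    show "emeasure G K \<le> 0"
    proof (cases "K = {}")
      case True then show ?thesis by simp
    next
      case False
      obtain a where a: "a \<in> K" "\<forall>y\<in>K. a \<le> y" using compact_attains_inf[of K] K False by auto
      obtain b where b: "b \<in> K" "\<forall>y\<in>K. y \<le> b" using compact_attains_sup[of K] K False by auto
      have ca: "cdf G a = v" and cb: "cdf G b = v" using a b K by auto
      have "K \<subseteq> {a} \<union> {a<..b}" using a b by auto
      hence "emeasure G K \<le> emeasure G ({a} \<union> {a<..b})"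
        by (intro emeasure_mono) auto
      also have "\<dots> \<le> emeasure G {a} + emeasure G {a<..b}"
        by (intro emeasure_subadditive) auto
      also have "emeasure G {a<..b} = 0"
      proof (cases "a < b")
        case True
        have "measure G {a<..b} = cdf G b - cdf G a" using cdf_diff_eq[OF True] by simp
        then show ?thesis using ca cb by (simp add: emeasure_eq_measure)
      next
        case False then show ?thesis by simp
      qed
      finally show ?thesis using at by simp
    qed
  qed
  finally have "emeasure G ?L = 0" by simp
  then show ?thesis using Lb by (auto simp: null_sets_def)
qed


lemma td_rd: "type_distribution H \<Longrightarrow> real_distribution H"
  unfolding type_distribution_def real_distribution_def real_distribution_axioms_def by auto

lemma td_neg: assumes "type_distribution H" shows "emeasure H {..<0} = 0"
proof -
  obtain K where K: "compact K" "K \<subseteq> {0..}" "emeasure H (UNIV - K) = 0" and s: "sets H = sets borel"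
    using assms unfolding type_distribution_def by auto
  have "UNIV - K \<in> sets H" using K(1) s compact_imp_closed by (auto intro!: borel_open open_Diff)
  moreover have "{..<0} \<subseteq> UNIV - K" using K(2) by auto
  ultimately have "emeasure H {..<0} \<le> emeasure H (UNIV - K)" by (rule emeasure_mono[rotated])
  then show ?thesis using K(3) by simp
qed

lemma td_cont: assumes "type_distribution H" shows "isCont (cdf H) x"
proof -
  interpret real_distribution H using td_rd[OF assms] .
  have "emeasure H {x} = 0" using assms unfolding type_distribution_def by auto
  then show ?thesis by (simp add: isCont_cdf emeasure_eq_measure)
qed

lemma td_zero: assumes "type_distribution H" shows "cdf H 0 = 0"
proof -
  interpret real_distribution H using td_rd[OF assms] .
  have "emeasure H {0} = 0" using assms unfolding type_distribution_def by auto
  moreover have "emeasure H {..0} \<le> emeasure H {..<0} + emeasure H {0}"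
  proof -
    have "{..0} = {..<0} \<union> {0::real}" by auto
    then show ?thesis by (metis emeasure_subadditive sets_M borel_closed closed_singleton atLeastAtMost_borel
        borel_open open_lessThan)
  qed
  ultimately have "emeasure H {..0} = 0" using td_neg[OF assms] by simp
  then show ?thesis by (simp add: cdf_def emeasure_eq_measure)
qed

lemma td_one: assumes "type_distribution H" shows "\<exists>b\<ge>0. cdf H b = 1"
proof -
  interpret real_distribution H using td_rd[OF assms] .
  obtain K where K: "compact K" "K \<subseteq> {0..}" "emeasure H (UNIV - K) = 0"
    using assms unfolding type_distribution_def by auto
  obtain b where b: "\<forall>x\<in>K. x \<le> b" using compact_imp_bounded[OF K(1)] bounded_real by (metis abs_le_D1)
  let ?b = "max b 0"
  have "UNIV - {..?b} \<subseteq> UNIV - K" using b by force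
  hence "emeasure H (UNIV - {..?b}) \<le> emeasure H (UNIV - K)"
    using K(1) compact_imp_closed by (intro emeasure_mono) (auto intro!: borel_open open_Diff)
  hence "emeasure H (UNIV - {..?b}) = 0" using K(3) by simp
  hence "measure H (UNIV - {..?b}) = 0" by (simp add: measure_def)
  moreover have "measure H (UNIV - {..?b}) = 1 - measure H {..?b}"
    using prob_compl[of "{..?b}"] by simp
  ultimately have "cdf H ?b = 1" by (simp add: cdf_def)
  then show ?thesis by (intro exI[of _ ?b]) auto
qed

lemma td_le: assumes "type_distribution H" "S \<subseteq> A \<union> {..<0}" "S \<in> sets H" "A \<in> sets H"
  shows "measure H S \<le> measure H A"
proof -
  interpret real_distribution H using td_rd[OF assms(1)] .
  have "measure H S \<le> measure H (A \<union> {..<0})" using assms by (intro finite_measure_mono) auto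
  also have "\<dots> \<le> measure H A + measure H {..<0}" using assms by (intro measure_subadditive) (auto simp: emeasure_eq_measure)
  also have "measure H {..<0} = 0" using td_neg[OF assms(1)] by (simp add: measure_def)
  finally show ?thesis by simp
qed


lemma main:
  fixes G F :: "real measure"
    and f g :: "real \<Rightarrow> real \<Rightarrow> real"
    and M :: "(real \<times> real) set"
    and \<Gamma> :: "real \<Rightarrow> real \<times> real"
    and p D :: "real \<Rightarrow> real"
  assumes tG: "type_distribution G" and tF: "type_distribution F"
    and cg: "cost_fun g" and vf: "value_fun f"
    and mM: "menu M"
    and eq: "market_equilibrium M G F f g \<Gamma> p D"
  shows "(\<forall>\<psi>1 \<psi>2. 0 \<le> \<psi>1 \<longrightarrow> \<psi>1 \<le> \<psi>2 \<longrightarrow> fst (\<Gamma> \<psi>1) \<le> fst (\<Gamma> \<psi>2)) \<and>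
         (AE \<psi> in G. 0 \<le> \<psi> \<longrightarrow>
            (\<exists>\<phi>\<ge>0. cdf F \<phi> = cdf G \<psi>) \<and>
            (\<forall>\<phi>\<ge>0. cdf F \<phi> = cdf G \<psi> \<longrightarrow>
               D \<phi> = fst (\<Gamma> \<psi>) \<and> \<Gamma> \<psi> \<in> M \<and>
               (\<forall>(q, t)\<in>M. f q \<phi> - g q \<psi> - t \<le>
                  f (fst (\<Gamma> \<psi>)) \<phi> - g (fst (\<Gamma> \<psi>)) \<psi> - snd (\<Gamma> \<psi>))))"
proof -
  define Q where "Q = fst ` M"
  have finQ: "finite Q" using mM by (auto simp: menu_def Q_def)
  have Q01: "\<And>q. q \<in> Q \<Longrightarrow> 0 \<le> q \<and> q \<le> 1" using mM by (auto simp: menu_def Q_def)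
  have GM: "\<And>\<psi>. 0 \<le> \<psi> \<Longrightarrow> \<Gamma> \<psi> \<in> M" using eq by (auto simp: market_equilibrium_def)
  have GQ: "\<And>\<psi>. 0 \<le> \<psi> \<Longrightarrow> fst (\<Gamma> \<psi>) \<in> Q" using GM by (auto simp: Q_def)
  have prod: "\<And>\<psi> q t. 0 \<le> \<psi> \<Longrightarrow> (q, t) \<in> M \<Longrightarrow>
      p q - g q \<psi> - t \<le> p (fst (\<Gamma> \<psi>)) - g (fst (\<Gamma> \<psi>)) \<psi> - snd (\<Gamma> \<psi>)"
    using eq unfolding market_equilibrium_def by fast
  have DQ: "\<And>\<phi>. 0 \<le> \<phi> \<Longrightarrow> D \<phi> \<in> Q" using eq by (auto simp: market_equilibrium_def Q_def)
  have cons: "\<And>\<phi> q. 0 \<le> \<phi> \<Longrightarrow> q \<in> Q \<Longrightarrow> f q \<phi> - p q \<le> f (D \<phi>) \<phi> - p (D \<phi>)"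
    using eq unfolding market_equilibrium_def Q_def by blast
  have clear: "\<And>q. q \<in> Q \<Longrightarrow> {\<psi>. 0 \<le> \<psi> \<and> fst (\<Gamma> \<psi>) = q} \<in> sets G \<and>
        {\<phi>. 0 \<le> \<phi> \<and> D \<phi> = q} \<in> sets F \<and>
        measure G {\<psi>. 0 \<le> \<psi> \<and> fst (\<Gamma> \<psi>) = q} = measure F {\<phi>. 0 \<le> \<phi> \<and> D \<phi> = q}"
    using eq unfolding market_equilibrium_def Q_def by blast
  have monoG: "fst (\<Gamma> \<psi>1) \<le> fst (\<Gamma> \<psi>2)" if "0 \<le> \<psi>1" "\<psi>1 \<le> \<psi>2" for \<psi>1 \<psi>2
  proof (rule ccontr)
    assume c: "\<not> ?thesis"
    have lt: "\<psi>1 < \<psi>2" using c that by (cases "\<psi>1 = \<psi>2") auto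
    let ?q1 = "fst (\<Gamma> \<psi>1)" and ?q2 = "fst (\<Gamma> \<psi>2)"
    have m1: "(?q2, snd (\<Gamma> \<psi>2)) \<in> M" using GM[of \<psi>2] that by simp
    have m2: "(?q1, snd (\<Gamma> \<psi>1)) \<in> M" using GM[of \<psi>1] that by simp
    have a: "p ?q2 - g ?q2 \<psi>1 - snd (\<Gamma> \<psi>2) \<le> p ?q1 - g ?q1 \<psi>1 - snd (\<Gamma> \<psi>1)"
      using prod[OF that(1) m1] .
    have b: "p ?q1 - g ?q1 \<psi>2 - snd (\<Gamma> \<psi>1) \<le> p ?q2 - g ?q2 \<psi>2 - snd (\<Gamma> \<psi>2)"
      using prod[OF _ m2] that by simp
    have "g ?q1 \<psi>2 - g ?q2 \<psi>2 < g ?q1 \<psi>1 - g ?q2 \<psi>1"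
      using cg[unfolded cost_fun_def] that lt c Q01[OF GQ[of \<psi>1]] Q01[OF GQ[of \<psi>2]] by auto
    then show False using a b by linarith
  qed
  have monoD: "D \<phi>1 \<le> D \<phi>2" if "0 \<le> \<phi>1" "\<phi>1 \<le> \<phi>2" for \<phi>1 \<phi>2
  proof (rule ccontr)
    assume c: "\<not> ?thesis"
    have lt: "\<phi>1 < \<phi>2" using c that by (cases "\<phi>1 = \<phi>2") auto
    have a: "f (D \<phi>2) \<phi>1 - p (D \<phi>2) \<le> f (D \<phi>1) \<phi>1 - p (D \<phi>1)"
      using cons[OF that(1) DQ[of \<phi>2]] that by simp
    have b: "f (D \<phi>1) \<phi>2 - p (D \<phi>1) \<le> f (D \<phi>2) \<phi>2 - p (D \<phi>2)"
      using cons[OF _ DQ[of \<phi>1]] that by simp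
    have "f (D \<phi>1) \<phi>2 - f (D \<phi>2) \<phi>2 > f (D \<phi>1) \<phi>1 - f (D \<phi>2) \<phi>1"
      using vf[unfolded value_fun_def] that lt c Q01[OF DQ[of \<phi>1]] Q01[OF DQ[of \<phi>2]] by auto
    then show False using a b by linarith
  qed
  interpret G: real_distribution G using td_rd[OF tG] .
  interpret F: real_distribution F using td_rd[OF tF] .
  define A where "A r = {\<psi>. 0 \<le> \<psi> \<and> fst (\<Gamma> \<psi>) \<le> r}" for r
  define B where "B r = {\<phi>. 0 \<le> \<phi> \<and> D \<phi> \<le> r}" for r
  have AU: "A r = (\<Union>q\<in>{q\<in>Q. q \<le> r}. {\<psi>. 0 \<le> \<psi> \<and> fst (\<Gamma> \<psi>) = q})" for r
    using GQ by (auto simp: A_def)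
  have BU: "B r = (\<Union>q\<in>{q\<in>Q. q \<le> r}. {\<phi>. 0 \<le> \<phi> \<and> D \<phi> = q})" for r
    using DQ by (auto simp: B_def)
  have Asets: "A r \<in> sets G" for r
    unfolding AU using finQ clear by (intro sets.finite_UN) auto
  have Bsets: "B r \<in> sets F" for r
    unfolding BU using finQ clear by (intro sets.finite_UN) auto
  have AB: "measure G (A r) = measure F (B r)" for r
  proof -
    have "measure G (A r) = (\<Sum>q\<in>{q\<in>Q. q \<le> r}. measure G {\<psi>. 0 \<le> \<psi> \<and> fst (\<Gamma> \<psi>) = q})"
      unfolding AU using finQ clear
      by (intro measure_finite_Union) (auto simp: disjoint_family_on_def G.emeasure_finite)
    also have "\<dots> = (\<Sum>q\<in>{q\<in>Q. q \<le> r}. measure F {\<phi>. 0 \<le> \<phi> \<and> D \<phi> = q})"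
      using clear by (intro sum.cong) auto
    also have "\<dots> = measure F (B r)"
      unfolding BU using finQ clear
      by (intro measure_finite_Union[symmetric]) (auto simp: disjoint_family_on_def F.emeasure_finite)
    finally show ?thesis .
  qed
  define N where "N = (\<Union>r\<in>Q. {\<psi>. cdf G \<psi> = measure G (A r)})"
  have Nnull: "N \<in> null_sets G"
    unfolding N_def using finQ level_null[OF td_rd[OF tG]] tG
    by (intro null_sets.finite_UN) (auto simp: type_distribution_def)
  obtain bF where bF: "bF \<ge> 0" "cdf F bF = 1" using td_one[OF tF] by auto
  have key: "0 \<le> \<psi> \<longrightarrow>
            (\<exists>\<phi>\<ge>0. cdf F \<phi> = cdf G \<psi>) \<and>
            (\<forall>\<phi>\<ge>0. cdf F \<phi> = cdf G \<psi> \<longrightarrow>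
               D \<phi> = fst (\<Gamma> \<psi>) \<and> \<Gamma> \<psi> \<in> M \<and>
               (\<forall>(q, t)\<in>M. f q \<phi> - g q \<psi> - t \<le>
                  f (fst (\<Gamma> \<psi>)) \<phi> - g (fst (\<Gamma> \<psi>)) \<psi> - snd (\<Gamma> \<psi>)))"
    if nN: "\<psi> \<notin> N" for \<psi> :: real
  proof (intro impI conjI allI)
    assume \<psi>0: "0 \<le> \<psi>"
    show "\<exists>\<phi>\<ge>0. cdf F \<phi> = cdf G \<psi>"
    proof -
      have "cdf F 0 \<le> cdf G \<psi>" "cdf G \<psi> \<le> cdf F bF"
        using td_zero[OF tF] bF G.cdf_nonneg G.cdf_bounded_prob by auto
      from IVT[OF this bF(1)] td_cont[OF tF] show ?thesis by auto
    qed
    fix \<phi> assume \<phi>0: "0 \<le> \<phi>" and cc: "cdf F \<phi> = cdf G \<psi>"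
    show Deq: "D \<phi> = fst (\<Gamma> \<psi>)"
    proof (rule linorder_cases[of "D \<phi>" "fst (\<Gamma> \<psi>)"])
      assume lt: "D \<phi> < fst (\<Gamma> \<psi>)"
      let ?r = "D \<phi>"
      have "cdf F \<phi> \<le> measure F (B ?r)" unfolding cdf_def
        by (rule td_le[OF tF _ _ Bsets]) (auto simp: B_def intro: monoD)
      moreover have "measure G (A ?r) \<le> cdf G \<psi>" unfolding cdf_def
      proof (rule G.finite_measure_mono[OF _ G.sets_M])
        show "A ?r \<subseteq> {..\<psi>}"
        proof
          fix x assume x: "x \<in> A ?r"
          show "x \<in> {..\<psi>}"
          proof (rule ccontr)
            assume "x \<notin> {..\<psi>}"
            then have "fst (\<Gamma> \<psi>) \<le> fst (\<Gamma> x)" using monoG[OF \<psi>0] by auto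
            then show False using x lt by (auto simp: A_def)
          qed
        qed
      qed auto
      ultimately have "cdf G \<psi> = measure G (A ?r)" using AB cc by (metis order_antisym)
      then have "\<psi> \<in> N" using DQ[OF \<phi>0] by (auto simp: N_def)
      then show ?thesis using nN by simp
    next
      assume lt: "D \<phi> > fst (\<Gamma> \<psi>)"
      let ?r = "fst (\<Gamma> \<psi>)"
      have "cdf G \<psi> \<le> measure G (A ?r)" unfolding cdf_def
        by (rule td_le[OF tG _ _ Asets]) (auto simp: A_def intro: monoG)
      moreover have "measure F (B ?r) \<le> cdf F \<phi>" unfolding cdf_def
      proof (rule F.finite_measure_mono[OF _ F.sets_M])
        show "B ?r \<subseteq> {..\<phi>}"
        proof
          fix x assume x: "x \<in> B ?r"
          show "x \<in> {..\<phi>}"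
          proof (rule ccontr)
            assume "x \<notin> {..\<phi>}"
            then have "D \<phi> \<le> D x" using monoD[OF \<phi>0] by auto
            then show False using x lt by (auto simp: B_def)
          qed
        qed
      qed auto
      ultimately have "cdf G \<psi> = measure G (A ?r)" using AB cc by (metis order_antisym)
      then have "\<psi> \<in> N" using GQ[OF \<psi>0] by (auto simp: N_def)
      then show ?thesis using nN by simp
    qed simp
    show "\<Gamma> \<psi> \<in> M" using GM[OF \<psi>0] .
    show "\<forall>(q, t)\<in>M. f q \<phi> - g q \<psi> - t \<le> f (fst (\<Gamma> \<psi>)) \<phi> - g (fst (\<Gamma> \<psi>)) \<psi> - snd (\<Gamma> \<psi>)"
    proof (intro ballI, clarify)
      fix q t assume qt: "(q, t) \<in> M"
      have "p q - g q \<psi> - t \<le> p (fst (\<Gamma> \<psi>)) - g (fst (\<Gamma> \<psi>)) \<psi> - snd (\<Gamma> \<psi>)"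
        using prod[OF \<psi>0 qt] .
      moreover have "f q \<phi> - p q \<le> f (D \<phi>) \<phi> - p (D \<phi>)"
        using cons[OF \<phi>0] qt by (force simp: Q_def)
      ultimately show "f q \<phi> - g q \<psi> - t \<le> f (fst (\<Gamma> \<psi>)) \<phi> - g (fst (\<Gamma> \<psi>)) \<psi> - snd (\<Gamma> \<psi>)"
        using Deq by simp
    qed
  qed
  have AE: "AE \<psi> in G. 0 \<le> \<psi> \<longrightarrow>
            (\<exists>\<phi>\<ge>0. cdf F \<phi> = cdf G \<psi>) \<and>
            (\<forall>\<phi>\<ge>0. cdf F \<phi> = cdf G \<psi> \<longrightarrow>
               D \<phi> = fst (\<Gamma> \<psi>) \<and> \<Gamma> \<psi> \<in> M \<and>
               (\<forall>(q, t)\<in>M. f q \<phi> - g q \<psi> - t \<le>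
                  f (fst (\<Gamma> \<psi>)) \<phi> - g (fst (\<Gamma> \<psi>)) \<psi> - snd (\<Gamma> \<psi>)))"
    by (rule AE_I'[OF Nnull]) (use key in blast)
  show ?thesis using monoG AE by blast
qed

theorem corollary1:
  fixes G F :: "real measure"
    and f g :: "real \<Rightarrow> real \<Rightarrow> real"
    and M :: "(real \<times> real) set"
    and \<Gamma> :: "real \<Rightarrow> real \<times> real"
    and p D :: "real \<Rightarrow> real"
  assumes "type_distribution G" and "type_distribution F"
    and "cost_fun g" and "value_fun f"
    and "menu M"
    and "market_equilibrium M G F f g \<Gamma> p D"
  shows "(\<forall>\<psi>1 \<psi>2. 0 \<le> \<psi>1 \<longrightarrow> \<psi>1 \<le> \<psi>2 \<longrightarrow> fst (\<Gamma> \<psi>1) \<le> fst (\<Gamma> \<psi>2)) \<and>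
         (AE \<psi> in G. 0 \<le> \<psi> \<longrightarrow>
            (\<exists>\<phi>\<ge>0. cdf F \<phi> = cdf G \<psi>) \<and>
            (\<forall>\<phi>\<ge>0. cdf F \<phi> = cdf G \<psi> \<longrightarrow>
               D \<phi> = fst (\<Gamma> \<psi>) \<and> \<Gamma> \<psi> \<in> M \<and>
               (\<forall>(q, t)\<in>M. f q \<phi> - g q \<psi> - t \<le>
                  f (fst (\<Gamma> \<psi>)) \<phi> - g (fst (\<Gamma> \<psi>)) \<psi> - snd (\<Gamma> \<psi>))))"
    using main[OF assms] .

end
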